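(* Let $k$ be an algebraically closed field of characteristic $2$, $g = x^2+y^2z+yz^2+xyz$, $m\ge 5$, $R_m = k[x_0,\dots,x_m,y_0,\dots,y_m,z_0,\dots,z_m]$, $(\mathbb{A}^3)_m=\mathrm{Spec}\,R_m$, and define $g^{(j)}\in R_m$ by $g(\sum_{i=0}^m x_it^i,\sum_{i=0}^m y_it^i,\sum_{i=0}^m z_it^i)=\sum_{j=0}^m g^{(j)}t^j$ in $R_m[t]/\langle t^{m+1}\rangle$. Define $I_m^0 = \langle x_0,x_1,x_2,y_0,y_1,z_0,z_1\rangle + \langle g^{(0)},\dots,g^{(m)}\rangle$, $I_m^1 = J_m^1 (R_m)_{z_1}\cap R_m$, $I_m^2 = J_m^2 (R_m)_{y_1}\cap R_m$, $I_m^3 = J_m^3 (R_m)_{y_1}\cap R_m$, where $J_m^1 = \langle x_0,x_1,y_0,y_1,z_0\rangle + \langle g^{(0)},\dots,g^{(m)}\rangle$, $J_m^2 = \langle x_0,x_1,y_0,z_0,z_1\rangle + \langle g^{(0)},\dots,g^{(m)}\rangle$, $J_m^3 = \langle x_0,x_1,y_0,z_0,y_1+z_1\rangle + \langle g^{(0)},\dots,g^{(m)}\rangle$, and let $Z_m^i=\mathbf{V}(I_m^i)$ for $i=0,1,2,3$. Let $\psi_1,\psi_2$ be the automorphisms of $(\mathbb{A}^3)_m$ corresponding to the $k$-algebra automorphisms $\varphi_1,\varphi_2$ of $R_m$ given by $\varphi_1: x_i\mapsto x_i,\ y_i\mapsto z_i,\ z_i\mapsto y_i$ and $\varphi_2: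 x_i\mapsto x_i,\ y_i\mapsto y_i,\ z_i\mapsto x_i+y_i+z_i$ (for all $i$). Then (1) $\psi_1(Z_m^0)=Z_m^0$, $\psi_1(Z_m^1)=Z_m^2$, $\psi_1(Z_m^2)=Z_m^1$, $\psi_1(Z_m^3)=Z_m^3$; (2) $\psi_2(Z_m^0)=Z_m^0$, $\psi_2(Z_m^1)=Z_m^1$, $\psi_2(Z_m^2)=Z_m^3$, $\psi_2(Z_m^3)=Z_m^2$.
   Context: $(R_m)_h$ is the localization at powers of $h$, $J(R_m)_h\cap R_m$ the preimage in $R_m$ of the extended ideal, and $\mathbf{V}(\cdot)$ the zero set in $(\mathbb{A}^3)_m$. *)

theory Defs
  imports "HOL-Library.Poly_Mapping" "HOL-Computational_Algebra.Polynomial"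
begin

datatype var = X nat | Y nat | Z nat

fun idx :: "var \<Rightarrow> nat" where
  "idx (X i) = i" | "idx (Y i) = i" | "idx (Z i) = i"

type_synonym 'k mpoly = "(var \<Rightarrow>\<^sub>0 nat) \<Rightarrow>\<^sub>0 'k"

definition Var :: "var \<Rightarrow> 'k::comm_ring_1 mpoly" where
  "Var v = Poly_Mapping.single (Poly_Mapping.single v 1) 1"

definition Const :: "'k::comm_ring_1 \<Rightarrow> 'k mpoly" where
  "Const c = Poly_Mapping.single 0 c"

definition Rm :: "nat \<Rightarrow> 'k::comm_ring_1 mpoly set" where
  "Rm m = {p :: 'k mpoly. \<forall>mon \<in> Poly_Mapping.keys p. \<forall>v \<in> Poly_Mapping.keys mon. idx v \<le> m}"

inductive_set ideal_gen :: "nat \<Rightarrow> 'k::comm_ring_1 mpoly set \<Rightarrow> 'k mpoly set"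
  for m S where
  zero: "0 \<in> ideal_gen m S"
| gen: "s \<in> S \<Longrightarrow> s \<in> ideal_gen m S"
| add: "a \<in> ideal_gen m S \<Longrightarrow> b \<in> ideal_gen m S \<Longrightarrow> a + b \<in> ideal_gen m S"
| smul: "r \<in> Rm m \<Longrightarrow> a \<in> ideal_gen m S \<Longrightarrow> r * a \<in> ideal_gen m S"

text \<open>J (R_m)_h \<inter> R_m, the preimage in R_m of the extension of J to the
  localization at the powers of h.\<close>
definition sat :: "nat \<Rightarrow> 'k::comm_ring_1 mpoly set \<Rightarrow> 'k mpoly \<Rightarrow> 'k mpoly set" where
  "sat m J h = {f \<in> Rm m. \<exists>n. h ^ n * f \<in> J}"

definition arc :: "nat \<Rightarrow> (nat \<Rightarrow> var) \<Rightarrow> 'k::comm_ring_1 mpoly poly" where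
  "arc m c = (\<Sum>i\<le>m. monom (Var (c i)) i)"

definition gpoly :: "'k::comm_ring_1 mpoly poly \<Rightarrow> 'k mpoly poly \<Rightarrow> 'k mpoly poly \<Rightarrow> 'k mpoly poly" where
  "gpoly x y z = x^2 + y^2 * z + y * z^2 + x * y * z"

text \<open>g^(j): coefficient of t^j (j \<le> m) of g(x(t),y(t),z(t)) mod t^(m+1).\<close>
definition gj :: "nat \<Rightarrow> nat \<Rightarrow> 'k::comm_ring_1 mpoly" where
  "gj m j = coeff (gpoly (arc m X) (arc m Y) (arc m Z)) j"

definition gens_g :: "nat \<Rightarrow> 'k::comm_ring_1 mpoly set" where
  "gens_g m = {gj m j | j. j \<le> m}"

definition I0 :: "nat \<Rightarrow> 'k::comm_ring_1 mpoly set" where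
  "I0 m = ideal_gen m ({Var (X 0), Var (X 1), Var (X 2), Var (Y 0), Var (Y 1), Var (Z 0), Var (Z 1)} \<union> gens_g m)"

definition J1 :: "nat \<Rightarrow> 'k::comm_ring_1 mpoly set" where
  "J1 m = ideal_gen m ({Var (X 0), Var (X 1), Var (Y 0), Var (Y 1), Var (Z 0)} \<union> gens_g m)"

definition J2 :: "nat \<Rightarrow> 'k::comm_ring_1 mpoly set" where
  "J2 m = ideal_gen m ({Var (X 0), Var (X 1), Var (Y 0), Var (Z 0), Var (Z 1)} \<union> gens_g m)"

definition J3 :: "nat \<Rightarrow> 'k::comm_ring_1 mpoly set" where
  "J3 m = ideal_gen m ({Var (X 0), Var (X 1), Var (Y 0), Var (Z 0), Var (Y 1) + Var (Z 1)} \<union> gens_g m)"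

definition I1 :: "nat \<Rightarrow> 'k::comm_ring_1 mpoly set" where
  "I1 m = sat m (J1 m) (Var (Z 1))"

definition I2 :: "nat \<Rightarrow> 'k::comm_ring_1 mpoly set" where
  "I2 m = sat m (J2 m) (Var (Y 1))"

definition I3 :: "nat \<Rightarrow> 'k::comm_ring_1 mpoly set" where
  "I3 m = sat m (J3 m) (Var (Y 1))"

definition eval :: "(var \<Rightarrow> 'k::comm_ring_1) \<Rightarrow> 'k mpoly \<Rightarrow> 'k" where
  "eval a p = (\<Sum>mon \<in> Poly_Mapping.keys p. Poly_Mapping.lookup p mon * (\<Prod>v \<in> Poly_Mapping.keys mon. a v ^ Poly_Mapping.lookup mon v))"

definition subst :: "(var \<Rightarrow> 'k::comm_ring_1 mpoly) \<Rightarrow> 'k mpoly \<Rightarrow> 'k mpoly" where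
  "subst \<sigma> p = (\<Sum>mon \<in> Poly_Mapping.keys p. Const (Poly_Mapping.lookup p mon) * (\<Prod>v \<in> Poly_Mapping.keys mon. \<sigma> v ^ Poly_Mapping.lookup mon v))"

text \<open>k-points of (A^3)_m: values of the variables of index \<le> m (normalised to 0 elsewhere).\<close>
definition pts :: "nat \<Rightarrow> (var \<Rightarrow> 'k::comm_ring_1) set" where
  "pts m = {a. \<forall>v. m < idx v \<longrightarrow> a v = 0}"

definition Vz :: "nat \<Rightarrow> 'k::comm_ring_1 mpoly set \<Rightarrow> (var \<Rightarrow> 'k) set" where
  "Vz m I = {a \<in> pts m. \<forall>f \<in> I. eval a f = 0}"

text \<open>Morphism of (A^3)_m induced by a k-algebra endomorphism phi of R_m:
  the point a (i.e. the k-algebra map eval a) goes to eval a \<circ> phi.\<close>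
definition psi :: "nat \<Rightarrow> ('k::comm_ring_1 mpoly \<Rightarrow> 'k mpoly) \<Rightarrow> (var \<Rightarrow> 'k) \<Rightarrow> (var \<Rightarrow> 'k)" where
  "psi m \<phi> a = (\<lambda>v. if idx v \<le> m then eval a (\<phi> (Var v)) else 0)"

definition phi1 :: "'k::comm_ring_1 mpoly \<Rightarrow> 'k mpoly" where
  "phi1 = subst (\<lambda>v. case v of X i \<Rightarrow> Var (X i) | Y i \<Rightarrow> Var (Z i) | Z i \<Rightarrow> Var (Y i))"

definition phi2 :: "'k::comm_ring_1 mpoly \<Rightarrow> 'k mpoly" where
  "phi2 = subst (\<lambda>v. case v of X i \<Rightarrow> Var (X i) | Y i \<Rightarrow> Var (Y i)
                      | Z i \<Rightarrow> Var (X i) + Var (Y i) + Var (Z i))"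

end

theory Submission
  imports Defs
begin


definition mon_ev :: "(var \<Rightarrow> 'b::comm_ring_1) \<Rightarrow> (var \<Rightarrow>\<^sub>0 nat) \<Rightarrow> 'b" where
  "mon_ev a mon = (\<Prod>v \<in> Poly_Mapping.keys mon. a v ^ Poly_Mapping.lookup mon v)"

definition evalg :: "('k::comm_ring_1 \<Rightarrow> 'b::comm_ring_1) \<Rightarrow> (var \<Rightarrow> 'b) \<Rightarrow> 'k mpoly \<Rightarrow> 'b" where
  "evalg h a p = (\<Sum>mon \<in> Poly_Mapping.keys p. h (Poly_Mapping.lookup p mon) * mon_ev a mon)"

lemma mon_ev_superset:
  assumes "finite S" "Poly_Mapping.keys mon \<subseteq> S"
  shows "mon_ev a mon = (\<Prod>v \<in> S. a v ^ Poly_Mapping.lookup mon v)"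
  unfolding mon_ev_def
  by (rule prod.mono_neutral_left) (use assms in \<open>auto simp: in_keys_iff\<close>)

lemma mon_ev_add: "mon_ev a (k + l) = mon_ev a k * mon_ev a l"
proof -
  let ?S = "Poly_Mapping.keys k \<union> Poly_Mapping.keys l"
  have "mon_ev a (k + l) = (\<Prod>v \<in> ?S. a v ^ Poly_Mapping.lookup (k+l) v)"
    by (rule mon_ev_superset) (auto dest: keys_add[THEN subsetD])
  also have "\<dots> = (\<Prod>v \<in> ?S. a v ^ Poly_Mapping.lookup k v * a v ^ Poly_Mapping.lookup l v)"
    by (simp add: lookup_add power_add)
  also have "\<dots> = mon_ev a k * mon_ev a l"
    by (simp add: prod.distrib mon_ev_superset[of ?S])
  finally show ?thesis .
qed

lemma mon_ev_zero [simp]: "mon_ev a 0 = 1"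
  by (simp add: mon_ev_def)

lemma poly_expand: "p = (\<Sum>k\<in>Poly_Mapping.keys p. Poly_Mapping.single k (Poly_Mapping.lookup p k))"
  by (rule poly_mapping_eqI)
     (simp add: lookup_sum lookup_single when_def in_keys_iff sum.delta cong: sum.cong)

locale ehom =
  fixes h :: "'k::comm_ring_1 \<Rightarrow> 'b::comm_ring_1"
  assumes h0: "h 0 = 0" and hadd: "h (x + y) = h x + h y"
    and hmult: "h (x * y) = h x * h y" and h1: "h 1 = 1"
begin

lemma evalg_zero [simp]: "evalg h a 0 = 0"
  by (simp add: evalg_def)

lemma evalg_add: "evalg h a (p + q) = evalg h a p + evalg h a q"
  unfolding evalg_def
  by (rule setsum_keys_plus_distrib) (simp_all add: h0 hadd distrib_right)

lemma evalg_single: "evalg h a (Poly_Mapping.single k c) = h c * mon_ev a k"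
  by (simp add: evalg_def h0)

lemma evalg_sum: "evalg h a (sum f A) = (\<Sum>x\<in>A. evalg h a (f x))"
  by (induction A rule: infinite_finite_induct) (simp_all add: evalg_add)

lemma evalg_mult: "evalg h a (p * q) = evalg h a p * evalg h a q"
proof -
  let ?P = "\<lambda>k. Poly_Mapping.single k (Poly_Mapping.lookup p k)"
  let ?Q = "\<lambda>k. Poly_Mapping.single k (Poly_Mapping.lookup q k)"
  have "p * q = (\<Sum>k\<in>Poly_Mapping.keys p. ?P k) * (\<Sum>l\<in>Poly_Mapping.keys q. ?Q l)"
    using poly_expand[of p] poly_expand[of q] by simp
  also have "\<dots> = (\<Sum>k\<in>Poly_Mapping.keys p. \<Sum>l\<in>Poly_Mapping.keys q. ?P k * ?Q l)"
    by (rule sum_product)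
  finally have "evalg h a (p * q) = (\<Sum>k\<in>Poly_Mapping.keys p. \<Sum>l\<in>Poly_Mapping.keys q.
       (h (Poly_Mapping.lookup p k) * mon_ev a k) * (h (Poly_Mapping.lookup q l) * mon_ev a l))"
    by (simp add: evalg_sum mult_single evalg_single hmult mon_ev_add mult_ac)
  also have "\<dots> = evalg h a p * evalg h a q"
    by (simp add: evalg_def sum_product)
  finally show ?thesis .
qed

lemma evalg_one [simp]: "evalg h a 1 = 1"
  using evalg_single[of a 0 1] by (simp add: h1)

lemma evalg_uminus: "evalg h a (- p) = - evalg h a p"
  using evalg_add[of a p "-p"] by (simp add: eq_neg_iff_add_eq_0 add.commute)

lemma evalg_diff: "evalg h a (p - q) = evalg h a p - evalg h a q"
  using evalg_add[of a p "-q"] evalg_uminus by simp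

lemma evalg_prod: "evalg h a (prod f A) = (\<Prod>x\<in>A. evalg h a (f x))"
  by (induction A rule: infinite_finite_induct) (simp_all add: evalg_mult)

lemma evalg_power: "evalg h a (p ^ n) = evalg h a p ^ n"
  by (induction n) (simp_all add: evalg_mult)

lemma evalg_Var: "evalg h a (Var v) = a v"
  by (simp add: Var_def evalg_single h1 mon_ev_def)

end

interpretation id_hom: ehom id by unfold_locales auto
interpretation const_hom: ehom "Const :: 'k::comm_ring_1 \<Rightarrow> 'k mpoly"
  by unfold_locales (simp_all add: Const_def single_add mult_single)

lemma eval_is: "eval = evalg id"
  by (simp add: fun_eq_iff eval_def evalg_def mon_ev_def)

lemma subst_is: "subst = evalg Const"
  by (simp add: fun_eq_iff subst_def evalg_def mon_ev_def)



lemma Rm_zero [simp]: "0 \<in> Rm m"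
  by (simp add: Rm_def)

lemma Rm_iff: "p \<in> Rm m \<longleftrightarrow> (\<forall>mon\<in>Poly_Mapping.keys p. \<forall>v\<in>Poly_Mapping.keys mon. idx v \<le> m)"
  by (simp add: Rm_def)

lemma Rm_add: "p \<in> Rm m \<Longrightarrow> q \<in> Rm m \<Longrightarrow> p + q \<in> Rm m"
  unfolding Rm_iff
proof (intro impI ballI)
  fix mon v assume p: "\<forall>mon\<in>Poly_Mapping.keys p. \<forall>v\<in>Poly_Mapping.keys mon. idx v \<le> m"
    and q: "\<forall>mon\<in>Poly_Mapping.keys q. \<forall>v\<in>Poly_Mapping.keys mon. idx v \<le> m"
    and mon: "mon \<in> Poly_Mapping.keys (p + q)" and v: "v \<in> Poly_Mapping.keys mon"
  from mon keys_add[of p q] have "mon \<in> Poly_Mapping.keys p \<or> mon \<in> Poly_Mapping.keys q" by auto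
  then show "idx v \<le> m"
  proof
    assume "mon \<in> Poly_Mapping.keys p" then show ?thesis using p v by auto
  next
    assume "mon \<in> Poly_Mapping.keys q" then show ?thesis using q v by auto
  qed
qed

lemma Rm_mult: "p \<in> Rm m \<Longrightarrow> q \<in> Rm m \<Longrightarrow> p * q \<in> Rm m"
  unfolding Rm_iff
proof (intro impI ballI)
  fix mon v assume p: "\<forall>mon\<in>Poly_Mapping.keys p. \<forall>v\<in>Poly_Mapping.keys mon. idx v \<le> m"
    and q: "\<forall>mon\<in>Poly_Mapping.keys q. \<forall>v\<in>Poly_Mapping.keys mon. idx v \<le> m"
    and mon: "mon \<in> Poly_Mapping.keys (p * q)" and v: "v \<in> Poly_Mapping.keys mon"
  from keys_mult mon obtain a b where "mon = a + b" "a \<in> Poly_Mapping.keys p" "b \<in> Poly_Mapping.keys q"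
    by blast
  with v keys_add[of a b] p q show "idx v \<le> m" by blast
qed

lemma Rm_uminus: "p \<in> Rm m \<Longrightarrow> - p \<in> Rm m"
  unfolding Rm_iff by (simp add: in_keys_iff)

lemma Rm_diff: "p \<in> Rm m \<Longrightarrow> q \<in> Rm m \<Longrightarrow> p - q \<in> Rm m"
  using Rm_add[of p m "-q"] Rm_uminus[of q m] by simp

lemma Rm_single: "\<forall>v\<in>Poly_Mapping.keys mon. idx v \<le> m \<Longrightarrow> Poly_Mapping.single mon c \<in> Rm m"
  unfolding Rm_iff by simp

lemma Rm_one [simp]: "1 \<in> Rm m"
  using Rm_single[of 0 m 1] by simp

lemma Rm_Const [simp]: "Const c \<in> Rm m"
  unfolding Const_def by (rule Rm_single) simp

lemma Rm_Var: "idx v \<le> m \<Longrightarrow> Var v \<in> Rm m"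
  unfolding Var_def by (rule Rm_single) simp

lemma Rm_sum: "(\<And>x. x \<in> A \<Longrightarrow> f x \<in> Rm m) \<Longrightarrow> sum f A \<in> Rm m"
  by (induction A rule: infinite_finite_induct) (simp_all add: Rm_add)

lemma Rm_prod: "(\<And>x. x \<in> A \<Longrightarrow> f x \<in> Rm m) \<Longrightarrow> prod f A \<in> Rm m"
  by (induction A rule: infinite_finite_induct) (simp_all add: Rm_mult)

lemma Rm_power: "p \<in> Rm m \<Longrightarrow> p ^ n \<in> Rm m"
  by (induction n) (simp_all add: Rm_mult)

lemma Rm_subst:
  assumes "\<And>v. idx v \<le> m \<Longrightarrow> \<sigma> v \<in> Rm m" "p \<in> Rm m"
  shows "subst \<sigma> p \<in> Rm m"
  unfolding subst_def
proof (rule Rm_sum)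
  fix mon assume mon: "mon \<in> Poly_Mapping.keys p"
  have "\<sigma> v ^ Poly_Mapping.lookup mon v \<in> Rm m" if "v \<in> Poly_Mapping.keys mon" for v
    using assms mon that unfolding Rm_iff[of p m] by (intro Rm_power) blast
  then show "Const (Poly_Mapping.lookup p mon) * (\<Prod>v\<in>Poly_Mapping.keys mon. \<sigma> v ^ Poly_Mapping.lookup mon v) \<in> Rm m"
    by (intro Rm_mult Rm_Const Rm_prod)
qed

lemma ideal_Rm: assumes "S \<subseteq> Rm m" "f \<in> ideal_gen m S" shows "f \<in> Rm m"
  using assms(2) by (induction rule: ideal_gen.induct) (use assms(1) in \<open>auto simp: Rm_add Rm_mult\<close>)

lemma ideal_smul_right: "r \<in> Rm m \<Longrightarrow> a \<in> ideal_gen m S \<Longrightarrow> a * r \<in> ideal_gen m S"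
  by (metis ideal_gen.smul mult.commute)

lemma ideal_uminus: "a \<in> ideal_gen m S \<Longrightarrow> - a \<in> ideal_gen m S"
  using ideal_gen.smul[of "-1" m a S] Rm_uminus[OF Rm_one, of m] by simp

lemma ideal_diff: "a \<in> ideal_gen m S \<Longrightarrow> b \<in> ideal_gen m S \<Longrightarrow> a - b \<in> ideal_gen m S"
  using ideal_gen.add[OF _ ideal_uminus, of a m S b] by simp

lemma subst_add: "subst \<sigma> (p + q) = subst \<sigma> p + subst \<sigma> q"
  by (simp add: subst_is const_hom.evalg_add)
lemma subst_mult: "subst \<sigma> (p * q) = subst \<sigma> p * subst \<sigma> q"
  by (simp add: subst_is const_hom.evalg_mult)
lemma subst_power: "subst \<sigma> (p ^ n) = subst \<sigma> p ^ n"
  by (simp add: subst_is const_hom.evalg_power)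
lemma subst_zero [simp]: "subst \<sigma> 0 = 0"
  by (simp add: subst_is)
lemma subst_diff: "subst \<sigma> (p - q) = subst \<sigma> p - subst \<sigma> q"
  by (simp add: subst_is const_hom.evalg_diff)
lemma subst_sum: "subst \<sigma> (sum f A) = (\<Sum>x\<in>A. subst \<sigma> (f x))"
  by (simp add: subst_is const_hom.evalg_sum)
lemma subst_Var [simp]: "subst \<sigma> (Var v) = \<sigma> v"
  by (simp add: subst_is const_hom.evalg_Var)

lemma subst_ideal:
  assumes "\<And>v. idx v \<le> m \<Longrightarrow> \<sigma> v \<in> Rm m" "\<And>s. s \<in> S \<Longrightarrow> subst \<sigma> s \<in> ideal_gen m S'"
  shows "f \<in> ideal_gen m S \<Longrightarrow> subst \<sigma> f \<in> ideal_gen m S'"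
proof (induction rule: ideal_gen.induct)
  case zero then show ?case by (simp add: ideal_gen.zero)
next
  case (gen s) then show ?case using assms(2) by blast
next
  case (add a b) then show ?case by (simp add: subst_add ideal_gen.add)
next
  case (smul r a) then show ?case
    by (simp add: subst_mult ideal_gen.smul Rm_subst assms(1))
qed

lemma pow_shift:
  assumes "j \<in> ideal_gen m S" "a \<in> Rm m" "j \<in> Rm m"
  shows "x \<in> Rm m \<Longrightarrow> a ^ n * x \<in> ideal_gen m S \<Longrightarrow> (a + j) ^ n * x \<in> ideal_gen m S"
proof (induction n arbitrary: x)
  case 0 then show ?case by simp
next
  case (Suc n)
  have 1: "(a + j) ^ n * (a * x) \<in> ideal_gen m S"
    using Suc.IH[of "a * x"] Suc.prems assms by (simp add: Rm_mult mult_ac)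
  have r: "(a + j) ^ n * x \<in> Rm m"
    using Suc.prems assms by (simp add: Rm_mult Rm_power Rm_add)
  have 2: "((a + j) ^ n * x) * j \<in> ideal_gen m S"
    using ideal_gen.smul[OF r assms(1)] by (simp add: mult.commute)
  have "(a + j) ^ Suc n * x = (a + j) ^ n * (a * x) + ((a + j) ^ n * x) * j"
    by (simp add: algebra_simps)
  then show ?case using 1 2 by (simp add: ideal_gen.add)
qed



lemma subst_sat:
  assumes \<sigma>: "\<And>v. idx v \<le> m \<Longrightarrow> \<sigma> v \<in> Rm m"
    and J: "\<And>f. f \<in> J \<Longrightarrow> subst \<sigma> f \<in> ideal_gen m S'"
    and h: "h \<in> Rm m" "h' \<in> Rm m" and d: "h' - subst \<sigma> h \<in> ideal_gen m S'"
    and f: "f \<in> sat m J h"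
  shows "subst \<sigma> f \<in> sat m (ideal_gen m S') h'"
proof -
  from f obtain n where fR: "f \<in> Rm m" and hn: "h ^ n * f \<in> J" by (auto simp: sat_def)
  have "subst \<sigma> h ^ n * subst \<sigma> f \<in> ideal_gen m S'"
    using J[OF hn] by (simp add: subst_mult subst_power)
  then have "(subst \<sigma> h + (h' - subst \<sigma> h)) ^ n * subst \<sigma> f \<in> ideal_gen m S'"
    by (intro pow_shift[OF d]) (auto simp: Rm_subst[OF \<sigma>] h fR Rm_diff)
  then show ?thesis using Rm_subst[OF \<sigma> fR] by (auto simp: sat_def)
qed

lemma two_k: "CHAR('k::comm_ring_1) = 2 \<Longrightarrow> (2::'k) = 0"
  by (metis of_nat_CHAR of_nat_numeral)

lemma two_mp: "(2::'k) = 0 \<Longrightarrow> (2::'k::comm_ring_1 mpoly) = 0"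
  by (metis single_numeral single_zero)

lemma two_pp: "(2::'a::comm_ring_1) = 0 \<Longrightarrow> (2::'a poly) = 0"
  by (simp add: numeral_poly)

lemma dbl: "(2::'a::comm_ring_1) = 0 \<Longrightarrow> x + x = (0::'a)"
  by (metis mult_2 mult_zero_left)

lemma mp_add: "map_poly (subst \<sigma>) (p + q) = map_poly (subst \<sigma>) p + map_poly (subst \<sigma>) q"
  by (rule poly_eqI) (simp add: coeff_map_poly subst_add)

lemma mp_mult: "map_poly (subst \<sigma>) (p * q) = map_poly (subst \<sigma>) p * map_poly (subst \<sigma>) q"
  by (rule poly_eqI) (simp add: coeff_map_poly coeff_mult subst_sum subst_mult)

lemma mp_sum: "map_poly (subst \<sigma>) (sum f A) = (\<Sum>x\<in>A. map_poly (subst \<sigma>) (f x))"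
  by (induction A rule: infinite_finite_induct) (simp_all add: mp_add)

lemma mp_gpoly: "map_poly (subst \<sigma>) (gpoly x y z) =
   gpoly (map_poly (subst \<sigma>) x) (map_poly (subst \<sigma>) y) (map_poly (subst \<sigma>) z)"
  by (simp add: gpoly_def mp_add mp_mult power2_eq_square)

lemma mp_arc: "map_poly (subst \<sigma>) (arc m c) = (\<Sum>i\<le>m. monom (\<sigma> (c i)) i)"
  by (simp add: arc_def mp_sum map_poly_monom)

lemma subst_gj: "subst \<sigma> (gj m j) =
   coeff (gpoly (map_poly (subst \<sigma>) (arc m X)) (map_poly (subst \<sigma>) (arc m Y)) (map_poly (subst \<sigma>) (arc m Z))) j"
  by (simp add: gj_def coeff_map_poly[symmetric] mp_gpoly)

definition sig1 :: "var \<Rightarrow> 'k::comm_ring_1 mpoly" where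
  "sig1 = (\<lambda>v. case v of X i \<Rightarrow> Var (X i) | Y i \<Rightarrow> Var (Z i) | Z i \<Rightarrow> Var (Y i))"
definition sig2 :: "var \<Rightarrow> 'k::comm_ring_1 mpoly" where
  "sig2 = (\<lambda>v. case v of X i \<Rightarrow> Var (X i) | Y i \<Rightarrow> Var (Y i)
                      | Z i \<Rightarrow> Var (X i) + Var (Y i) + Var (Z i))"

lemma phi1_eq: "phi1 = subst sig1" by (simp add: phi1_def sig1_def)
lemma phi2_eq: "phi2 = subst sig2" by (simp add: phi2_def sig2_def)

lemma gj_sig1: "subst sig1 (gj m j) = gj m j"
proof -
  have "subst sig1 (gj m j) = coeff (gpoly (arc m X) (arc m Z) (arc m Y)) j"
    by (simp only: subst_gj mp_arc) (simp add: sig1_def arc_def)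
  also have "gpoly (arc m X) (arc m Z) (arc m Y) = gpoly (arc m X) (arc m Y) (arc m Z)"
    by (simp add: gpoly_def algebra_simps)
  finally show ?thesis by (simp add: gj_def)
qed

lemma gpoly_shift: "gpoly x y (x + y + z) = gpoly x y z + 2 * (x*x*y + 2*x*y*y + y*y*y + x*y*z + y*y*z)"
  unfolding gpoly_def power2_eq_square by (simp add: algebra_simps)

lemma gj_sig2:
  assumes "(2::'k::comm_ring_1) = 0"
  shows "subst (sig2 :: var \<Rightarrow> 'k mpoly) (gj m j) = gj m j"
proof -
  have "subst (sig2 :: var \<Rightarrow> 'k mpoly) (gj m j) = coeff (gpoly (arc m X) (arc m Y) (arc m X + arc m Y + arc m Z)) j"
    by (simp only: subst_gj mp_arc) (simp add: sig2_def arc_def sum.distrib add_monom[symmetric])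
  also have "gpoly (arc m X) (arc m Y) (arc m X + arc m Y + arc m Z) = (gpoly (arc m X) (arc m Y) (arc m Z) :: 'k mpoly poly)"
    by (subst gpoly_shift) (simp add: two_pp[OF two_mp[OF assms]])
  finally show ?thesis by (simp add: gj_def)
qed



lemma coeff_Rm_add: "(\<And>n. coeff p n \<in> Rm m) \<Longrightarrow> (\<And>n. coeff q n \<in> Rm m) \<Longrightarrow> coeff (p + q) n \<in> Rm m"
  by (simp add: Rm_add)

lemma coeff_Rm_mult: "(\<And>n. coeff p n \<in> Rm m) \<Longrightarrow> (\<And>n. coeff q n \<in> Rm m) \<Longrightarrow> coeff (p * q) n \<in> Rm m"
  by (simp add: coeff_mult Rm_sum Rm_mult)

lemma coeff_Rm_arc: "(\<And>i. idx (c i) = i) \<Longrightarrow> coeff (arc m c) n \<in> Rm m"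
  unfolding arc_def coeff_sum by (rule Rm_sum) (auto intro: Rm_Var)

lemma gj_Rm: "gj m j \<in> Rm m"
proof -
  have a: "\<And>n. coeff (arc m X) n \<in> Rm m" "\<And>n. coeff (arc m Y) n \<in> Rm m" "\<And>n. coeff (arc m Z) n \<in> Rm m"
    by (rule coeff_Rm_arc; simp)+
  show ?thesis unfolding gj_def gpoly_def power2_eq_square
    by (intro coeff_Rm_add coeff_Rm_mult a)
qed

lemma gens_g_Rm: "gens_g m \<subseteq> Rm m"
  by (auto simp: gens_g_def gj_Rm)

lemma eval_Var: "eval a (Var v) = a v"
  by (simp add: eval_is id_hom.evalg_Var)

lemma eval_psi:
  assumes "f \<in> Rm m"
  shows "eval (psi m (subst \<sigma>) a) f = eval a (subst \<sigma> f)"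
proof -
  have "eval a (subst \<sigma> f) = (\<Sum>mon\<in>Poly_Mapping.keys f. Poly_Mapping.lookup f mon *
          (\<Prod>v\<in>Poly_Mapping.keys mon. eval a (\<sigma> v) ^ Poly_Mapping.lookup mon v))"
    by (simp add: subst_def eval_is id_hom.evalg_sum id_hom.evalg_mult id_hom.evalg_prod
        id_hom.evalg_power Const_def id_hom.evalg_single)
  also have "\<dots> = eval (psi m (subst \<sigma>) a) f"
    unfolding eval_def psi_def
    by (intro sum.cong refl arg_cong2[where f=times] prod.cong) (use assms in \<open>auto simp: Rm_iff\<close>)
  finally show ?thesis by simp
qed

lemma main:
  fixes \<sigma> \<sigma>' :: "var \<Rightarrow> 'k::comm_ring_1 mpoly"
  assumes \<sigma>: "\<And>v. idx v \<le> m \<Longrightarrow> \<sigma> v \<in> Rm m"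
    and inv: "\<And>v. idx v \<le> m \<Longrightarrow> subst \<sigma>' (\<sigma> v) = Var v"
    and IR: "I \<subseteq> Rm m" and I'R: "I' \<subseteq> Rm m"
    and A: "\<And>f. f \<in> I' \<Longrightarrow> subst \<sigma> f \<in> I" and B: "\<And>f. f \<in> I \<Longrightarrow> subst \<sigma>' f \<in> I'"
  shows "psi m (subst \<sigma>) ` Vz m I = Vz m I'"
proof
  show "psi m (subst \<sigma>) ` Vz m I \<subseteq> Vz m I'"
  proof
    fix b assume "b \<in> psi m (subst \<sigma>) ` Vz m I"
    then obtain a where a: "a \<in> Vz m I" and b: "b = psi m (subst \<sigma>) a" by auto
    have "b \<in> pts m" by (simp add: b pts_def psi_def)
    moreover have "eval b f = 0" if "f \<in> I'" for f
      using eval_psi[of f m \<sigma> a] that I'R A[OF that] a by (auto simp: b Vz_def)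
    ultimately show "b \<in> Vz m I'" by (simp add: Vz_def)
  qed
  show "Vz m I' \<subseteq> psi m (subst \<sigma>) ` Vz m I"
  proof
    fix b assume b: "b \<in> Vz m I'"
    define a where "a = psi m (subst \<sigma>') b"
    have "a \<in> pts m" by (simp add: a_def pts_def psi_def)
    moreover have "eval a f = 0" if "f \<in> I" for f
      using eval_psi[of f m \<sigma>' b] that IR B[OF that] b by (auto simp: a_def Vz_def)
    ultimately have aV: "a \<in> Vz m I" by (simp add: Vz_def)
    have "psi m (subst \<sigma>) a = b"
    proof
      fix v show "psi m (subst \<sigma>) a v = b v"
      proof (cases "idx v \<le> m")
        case True
        then have "psi m (subst \<sigma>) a v = eval a (\<sigma> v)" by (simp add: psi_def)
        also have "\<dots> = eval b (subst \<sigma>' (\<sigma> v))" unfolding a_def by (rule eval_psi[OF \<sigma>[OF True]])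
        also have "\<dots> = b v" by (simp add: inv[OF True] eval_Var)
        finally show ?thesis .
      next
        case False then show ?thesis using b by (simp add: psi_def Vz_def pts_def)
      qed
    qed
    with aV show "b \<in> psi m (subst \<sigma>) ` Vz m I" by blast
  qed
qed



definition "S0 m = {Var (X 0), Var (X 1), Var (X 2), Var (Y 0), Var (Y 1), Var (Z 0), Var (Z 1)} \<union> gens_g m"
definition "S1 m = {Var (X 0), Var (X 1), Var (Y 0), Var (Y 1), Var (Z 0)} \<union> gens_g m"
definition "S2 m = {Var (X 0), Var (X 1), Var (Y 0), Var (Z 0), Var (Z 1)} \<union> gens_g m"
definition "S3 m = {Var (X 0), Var (X 1), Var (Y 0), Var (Z 0), Var (Y 1) + Var (Z 1)} \<union> gens_g m"

lemma I0_eq: "I0 m = ideal_gen m (S0 m)" by (simp add: I0_def S0_def)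
lemma J1_eq: "J1 m = ideal_gen m (S1 m)" by (simp add: J1_def S1_def)
lemma J2_eq: "J2 m = ideal_gen m (S2 m)" by (simp add: J2_def S2_def)
lemma J3_eq: "J3 m = ideal_gen m (S3 m)" by (simp add: J3_def S3_def)

lemma gen2: "a \<in> S \<Longrightarrow> b \<in> S \<Longrightarrow> a + b \<in> ideal_gen m S"
  by (intro ideal_gen.add ideal_gen.gen)
lemma gen3: "a \<in> S \<Longrightarrow> b \<in> S \<Longrightarrow> c \<in> S \<Longrightarrow> a + b + c \<in> ideal_gen m S"
  by (intro ideal_gen.add ideal_gen.gen)

lemma gen3r: "a \<in> S \<Longrightarrow> b \<in> S \<Longrightarrow> c \<in> S \<Longrightarrow> a + (b + c) \<in> ideal_gen m S"
  by (intro ideal_gen.add ideal_gen.gen)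

lemma dbl3: "(2::'a::comm_ring_1) = 0 \<Longrightarrow> a + b + (a + b + c) = (c::'a)"
proof -
  assume h: "(2::'a) = 0"
  have "a + b + (a + b + c) = (a + a) + (b + b) + c" by (simp add: algebra_simps)
  then show ?thesis using dbl[OF h, of a] dbl[OF h, of b] by simp
qed

lemma minus_eq_plus: "(2::'a::comm_ring_1) = 0 \<Longrightarrow> a - b = a + (b::'a)"
proof -
  assume h: "(2::'a) = 0"
  have "a + b = a - b + (b + b)" by (simp add: algebra_simps)
  then show ?thesis using dbl[OF h, of b] by simp
qed

lemma sig1_simps [simp]: "sig1 (X i) = Var (X i)" "sig1 (Y i) = Var (Z i)" "sig1 (Z i) = Var (Y i)"
  by (simp_all add: sig1_def)
lemma sig2_simps [simp]: "sig2 (X i) = Var (X i)" "sig2 (Y i) = Var (Y i)" "sig2 (Z i) = Var (X i) + Var (Y i) + Var (Z i)"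
  by (simp_all add: sig2_def)

lemma sig1_Rm: "idx v \<le> m \<Longrightarrow> sig1 v \<in> Rm m"
  by (cases v) (auto simp: sig1_def intro: Rm_Var)
lemma sig2_Rm: "idx v \<le> m \<Longrightarrow> sig2 v \<in> Rm m"
  by (cases v) (auto simp: sig2_def intro!: Rm_Var Rm_add)
lemma sig1_inv: "subst sig1 (sig1 v) = Var v"
  by (cases v) (simp_all add: sig1_def)
lemma sig2_inv: "(2::'k::comm_ring_1) = 0 \<Longrightarrow> subst sig2 (sig2 v) = (Var v :: 'k mpoly)"
  by (cases v) (simp_all add: sig2_def subst_add dbl3[OF two_mp])

lemma S_Rm:
  assumes "m \<ge> 5"
  shows "S0 m \<subseteq> Rm m" "S1 m \<subseteq> Rm m" "S2 m \<subseteq> Rm m" "S3 m \<subseteq> Rm m"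
  using assms gens_g_Rm[of m] by (auto simp: S0_def S1_def S2_def S3_def intro!: Rm_Var Rm_add)

lemma gen_split:
  assumes "s \<in> A \<union> gens_g m" "\<And>j. j \<le> m \<Longrightarrow> subst \<sigma> (gj m j) = gj m j" "gens_g m \<subseteq> S'"
    "\<And>a. a \<in> A \<Longrightarrow> subst \<sigma> a \<in> ideal_gen m S'"
  shows "subst \<sigma> s \<in> ideal_gen m S'"
  using assms by (auto simp: gens_g_def intro: ideal_gen.gen)

context
  fixes m :: nat
  assumes m5: "m \<ge> 5"
begin

lemma I_Rm: "I0 m \<subseteq> Rm m" "I1 m \<subseteq> Rm m" "I2 m \<subseteq> Rm m" "I3 m \<subseteq> Rm m"
  using ideal_Rm[OF S_Rm(1)[OF m5]] by (auto simp: I0_eq I1_def I2_def I3_def sat_def)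

lemma g1_00: "s \<in> S0 m \<Longrightarrow> subst sig1 s \<in> ideal_gen m (S0 m)"
  unfolding S0_def[of m] by (erule gen_split) (auto simp: S0_def S0_def gj_sig1 intro: ideal_gen.gen gen3 gen2)
lemma g1_12: "s \<in> S1 m \<Longrightarrow> subst sig1 s \<in> ideal_gen m (S2 m)"
  unfolding S1_def[of m] by (erule gen_split) (auto simp: S1_def S2_def gj_sig1 intro: ideal_gen.gen gen3 gen2)
lemma g1_21: "s \<in> S2 m \<Longrightarrow> subst sig1 s \<in> ideal_gen m (S1 m)"
  unfolding S2_def[of m] by (erule gen_split) (auto simp: S2_def S1_def gj_sig1 intro: ideal_gen.gen gen3 gen2)
lemma g1_33: "s \<in> S3 m \<Longrightarrow> subst sig1 s \<in> ideal_gen m (S3 m)"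
  unfolding S3_def[of m] by (erule gen_split) (auto simp: S3_def S3_def gj_sig1 subst_add add.commute intro: ideal_gen.gen gen3 gen2)

context
  assumes c2: "(2::'k::comm_ring_1) = 0"
begin

lemma g2_00: "s \<in> S0 m \<Longrightarrow> subst sig2 s \<in> ideal_gen m (S0 m :: 'k mpoly set)"
  unfolding S0_def[of m] by (erule gen_split) (auto simp: S0_def S0_def gj_sig2[OF c2] intro: ideal_gen.gen gen3 gen2)
lemma g2_11: "s \<in> S1 m \<Longrightarrow> subst sig2 s \<in> ideal_gen m (S1 m :: 'k mpoly set)"
  unfolding S1_def[of m] by (erule gen_split) (auto simp: S1_def S1_def gj_sig2[OF c2] intro: ideal_gen.gen gen3 gen2)
lemma g2_23: "s \<in> S2 m \<Longrightarrow> subst sig2 s \<in> ideal_gen m (S3 m :: 'k mpoly set)"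
  unfolding S2_def[of m] by (erule gen_split) (auto simp: S2_def S3_def gj_sig2[OF c2] add.assoc intro: ideal_gen.gen gen3r gen2)
lemma g2_32: "s \<in> S3 m \<Longrightarrow> subst sig2 s \<in> ideal_gen m (S2 m :: 'k mpoly set)"
proof -
  have e: "Var (Y 1) + (Var (X 1) + Var (Y 1) + Var (Z 1)) = (Var (X 1) + Var (Z 1) :: 'k mpoly)"
    using dbl[OF two_mp[OF c2], of "Var (Y 1)"] by (simp add: algebra_simps)
  show "s \<in> S3 m \<Longrightarrow> ?thesis"
    unfolding S3_def[of m] by (erule gen_split) (auto simp: S2_def S3_def gj_sig2[OF c2] subst_add two_mp[OF c2] intro: ideal_gen.gen gen3 gen2)
qed

end
end


lemma sat_map:
  assumes \<sigma>R: "\<And>v. idx v \<le> m \<Longrightarrow> \<sigma> v \<in> Rm m"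
    and g: "\<And>s. s \<in> S \<Longrightarrow> subst \<sigma> s \<in> ideal_gen m S'"
    and h: "h \<in> Rm m" "h' \<in> Rm m" and d: "h' - subst \<sigma> h \<in> ideal_gen m S'"
    and f: "f \<in> sat m (ideal_gen m S) h"
  shows "subst \<sigma> f \<in> sat m (ideal_gen m S') h'"
  by (rule subst_sat[OF \<sigma>R subst_ideal[OF \<sigma>R g] h d f])

context
  fixes m :: nat
  assumes m5: "m \<ge> 5"
begin

lemma RmV: "idx v \<le> 2 \<Longrightarrow> Var v \<in> Rm m"
  using m5 by (intro Rm_Var) simp

context
  assumes c2: "(2::'k::comm_ring_1) = 0"
begin

lemma inc1_00: "f \<in> I0 m \<Longrightarrow> subst sig1 f \<in> (I0 m :: 'k mpoly set)"
  unfolding I0_eq by (rule subst_ideal[OF sig1_Rm g1_00[OF m5]])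
lemma inc1_12: "f \<in> I1 m \<Longrightarrow> subst sig1 f \<in> (I2 m :: 'k mpoly set)"
  unfolding I1_def I2_def J1_eq J2_eq
  by (rule sat_map[OF sig1_Rm g1_12[OF m5]]) (auto intro: RmV ideal_gen.zero)
lemma inc1_21: "f \<in> I2 m \<Longrightarrow> subst sig1 f \<in> (I1 m :: 'k mpoly set)"
  unfolding I1_def I2_def J1_eq J2_eq
  by (rule sat_map[OF sig1_Rm g1_21[OF m5]]) (auto intro: RmV ideal_gen.zero)
lemma inc1_33: "f \<in> I3 m \<Longrightarrow> subst sig1 f \<in> (I3 m :: 'k mpoly set)"
  unfolding I3_def J3_eq
  by (rule sat_map[OF sig1_Rm g1_33[OF m5]])
     (auto intro: RmV ideal_gen.gen simp: minus_eq_plus[OF two_mp[OF c2]] S3_def)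
lemma inc2_00: "f \<in> I0 m \<Longrightarrow> subst sig2 f \<in> (I0 m :: 'k mpoly set)"
  unfolding I0_eq by (rule subst_ideal[OF sig2_Rm g2_00[OF m5 c2]])
lemma inc2_11: "f \<in> I1 m \<Longrightarrow> subst sig2 f \<in> (I1 m :: 'k mpoly set)"
proof -
  have "Var (Z 1) - subst sig2 (Var (Z 1)) = - (Var (X 1) + Var (Y 1) :: 'k mpoly)"
    by (simp add: algebra_simps)
  also have "\<dots> \<in> ideal_gen m (S1 m)"
    by (intro ideal_uminus gen2) (simp_all add: S1_def)
  finally have d: "Var (Z 1) - subst sig2 (Var (Z 1)) \<in> ideal_gen m (S1 m :: 'k mpoly set)" .
  show "f \<in> I1 m \<Longrightarrow> ?thesis"
    unfolding I1_def J1_eq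
    by (rule sat_map[OF sig2_Rm g2_11[OF m5 c2] RmV RmV d]) simp_all
qed
lemma inc2_23: "f \<in> I2 m \<Longrightarrow> subst sig2 f \<in> (I3 m :: 'k mpoly set)"
  unfolding I2_def I3_def J2_eq J3_eq
  by (rule sat_map[OF sig2_Rm g2_23[OF m5 c2]]) (auto intro: RmV ideal_gen.zero)
lemma inc2_32: "f \<in> I3 m \<Longrightarrow> subst sig2 f \<in> (I2 m :: 'k mpoly set)"
  unfolding I2_def I3_def J2_eq J3_eq
  by (rule sat_map[OF sig2_Rm g2_32[OF m5 c2]]) (auto intro: RmV ideal_gen.zero)

end
end

theorem lemma4p11:
  fixes m :: nat
  assumes "CHAR('k::alg_closed_field) = 2"
    and "m \<ge> 5"
  shows "psi m phi1 ` Vz m (I0 m :: 'k mpoly set) = Vz m (I0 m)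
       \<and> psi m phi1 ` Vz m (I1 m :: 'k mpoly set) = Vz m (I2 m)
       \<and> psi m phi1 ` Vz m (I2 m :: 'k mpoly set) = Vz m (I1 m)
       \<and> psi m phi1 ` Vz m (I3 m :: 'k mpoly set) = Vz m (I3 m)
       \<and> psi m phi2 ` Vz m (I0 m :: 'k mpoly set) = Vz m (I0 m)
       \<and> psi m phi2 ` Vz m (I1 m :: 'k mpoly set) = Vz m (I1 m)
       \<and> psi m phi2 ` Vz m (I2 m :: 'k mpoly set) = Vz m (I3 m)
       \<and> psi m phi2 ` Vz m (I3 m :: 'k mpoly set) = Vz m (I2 m)"
proof -
  have c2: "(2::'k) = 0" by (rule two_k[OF assms(1)])
  note m5 = assms(2)
  note R = I_Rm[OF m5]
  note inv2 = sig2_inv[OF c2]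
  show ?thesis unfolding phi1_eq phi2_eq
    by (intro conjI main[OF sig1_Rm sig1_inv] main[OF sig2_Rm inv2] R
          inc1_00[OF m5 c2] inc1_12[OF m5 c2] inc1_21[OF m5 c2] inc1_33[OF m5 c2]
          inc2_00[OF m5 c2] inc2_11[OF m5 c2] inc2_23[OF m5 c2] inc2_32[OF m5 c2])
qed

end
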